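(* Let $m\ge1$, $L\in\{L',\mathcal{R}^*\}$ and $C(m)=\{(Tr(ax))_{x\in L}:a\in\mathcal{R}\}\subseteq R^{|L|}$. Then the dual Lee distance of $C(m)$, i.e. the minimum Lee weight of a nonzero codeword of $C(m)^\perp=\{y\in R^{|L|}:\sum_{x\in L}c_xy_x=0\ \forall c\in C(m)\}$, equals $2$.
   Context: Let $R=\mathbb{F}_3[u]/(u^3-1)$ and $\mathcal{R}=\mathbb{F}_{3^m}[u]/(u^3-1)=\mathbb{F}_{3^m}+u\mathbb{F}_{3^m}+u^2\mathbb{F}_{3^m}$. Every element of $\mathcal{R}$ is uniquely $x_1+x_2(u-1)+x_3(u-1)^2$ with $x_i\in\mathbb{F}_{3^m}$; $\mathcal{R}^*$ (the units) consists of those with $x_1\neq0$. $Tr:\mathcal{R}\to R$ is $Tr(a+ub+u^2c)=tr(a)+u\,tr(b)+u^2tr(c)$, with $tr$ the absolute trace $\mathbb{F}_{3^m}\to\mathbb{F}_3$. $\mathcal{Q}$ denotes the nonzero squares of $\mathbb{F}_{3^m}$ and $L'=\{x_1+x_2(u-1)+x_3(u-1)^2:x_1\in\mathcal{Q},x_2,x_3\in\mathbb{F}_{3^m}\}$. Coordinates of $R^{|L|}$ are indexed by $L$. The Gray map $\phi:R\to\mathbb{F}_3^3$ is $\phi(a'+ub'+u^2c')=(a',b',c')$, extended coordinatewise; the Lee weight of $v\in R^n$ is the Hamming weight of $\phi(v)$. *)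

theory Defs
  imports Main
begin

text \<open>Elements of \<open>K[u]/(u^3-1)\<close> are represented by coefficient triples
  \<open>(a,b,c)\<close> standing for \<open>a + u b + u^2 c\<close>.  Here \<open>K\<close> is a finite field
  \<open>'a\<close> of order \<open>3^m\<close> (playing the role of \<open>F_{3^m}\<close>); the ring
  \<open>R = F_3[u]/(u^3-1)\<close> is the subring of triples with all coefficients in the
  prime field \<open>F_3 = {0,1,2}\<close> of \<open>'a\<close>.\<close>

type_synonym 'a cyc3 = "'a \<times> 'a \<times> 'a"

definition cadd :: "'a::field cyc3 \<Rightarrow> 'a cyc3 \<Rightarrow> 'a cyc3" where
  "cadd x y = (case x of (a,b,c) \<Rightarrow> case y of (a',b',c') \<Rightarrow> (a+a', b+b', c+c'))"

text \<open>Multiplication modulo \<open>u^3 - 1\<close>.\<close>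
definition cmul :: "'a::field cyc3 \<Rightarrow> 'a cyc3 \<Rightarrow> 'a cyc3" where
  "cmul x y = (case x of (a,b,c) \<Rightarrow> case y of (a',b',c') \<Rightarrow>
     (a*a' + b*c' + c*b', a*b' + b*a' + c*c', a*c' + b*b' + c*a'))"

definition czero :: "'a::field cyc3" where "czero = (0,0,0)"
definition cone :: "'a::field cyc3" where "cone = (1,0,0)"

definition csum :: "('b \<Rightarrow> 'a::field cyc3) \<Rightarrow> 'b set \<Rightarrow> 'a cyc3" where
  "csum f A = (sum (\<lambda>x. fst (f x)) A, sum (\<lambda>x. fst (snd (f x))) A, sum (\<lambda>x. snd (snd (f x))) A)"

definition F3 :: "'a::field set" where "F3 = {0, 1, 2}"
definition Rset :: "'a::field cyc3 set" where "Rset = F3 \<times> F3 \<times> F3"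

definition abstr :: "nat \<Rightarrow> 'a::field \<Rightarrow> 'a" where
  "abstr m x = (\<Sum>i<m. x ^ (3 ^ i))"

definition Tr :: "nat \<Rightarrow> 'a::field cyc3 \<Rightarrow> 'a cyc3" where
  "Tr m x = (case x of (a,b,c) \<Rightarrow> (abstr m a, abstr m b, abstr m c))"

text \<open>\<open>x1 + x2(u-1) + x3(u-1)^2\<close>, using \<open>(u-1)^2 = u^2 - 2u + 1\<close>.\<close>
definition ubasis :: "'a::field \<Rightarrow> 'a \<Rightarrow> 'a \<Rightarrow> 'a cyc3" where
  "ubasis x1 x2 x3 = (x1 - x2 + x3, x2 - 2*x3, x3)"

definition Qsq :: "'a::field set" where "Qsq = {x^2 | x. x \<noteq> 0}"

definition Lprime :: "'a::field cyc3 set" where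
  "Lprime = {ubasis x1 x2 x3 | x1 x2 x3. x1 \<in> Qsq}"

definition Runits :: "'a::field cyc3 set" where
  "Runits = {x. \<exists>y. cmul x y = cone}"

text \<open>The trace code \<open>C(m) = {(Tr(a x))_{x\<in>L} : a \<in> \<R>}\<close>, vectors indexed by \<open>L\<close>
  (represented as functions that vanish outside \<open>L\<close>).\<close>
definition tcode :: "nat \<Rightarrow> 'a::field cyc3 set \<Rightarrow> ('a cyc3 \<Rightarrow> 'a cyc3) set" where
  "tcode m L = {(\<lambda>x. if x \<in> L then Tr m (cmul a x) else czero) | a. True}"

definition dual_code :: "'a::field cyc3 set \<Rightarrow> ('a cyc3 \<Rightarrow> 'a cyc3) set \<Rightarrow> ('a cyc3 \<Rightarrow> 'a cyc3) set" where
  "dual_code L C = {y. (\<forall>x\<in>L. y x \<in> Rset) \<and> (\<forall>x. x \<notin> L \<longrightarrow> y x = czero) \<and>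
      (\<forall>c\<in>C. csum (\<lambda>x. cmul (c x) (y x)) L = czero)}"

text \<open>Hamming weight of the Gray image \<open>(a',b',c')\<close>.\<close>
definition gray_wt :: "'a::field cyc3 \<Rightarrow> nat" where
  "gray_wt x = (case x of (a,b,c) \<Rightarrow> card {i::nat. i < 3 \<and> [a,b,c] ! i \<noteq> 0})"

definition lee_wt :: "'a::field cyc3 set \<Rightarrow> ('a cyc3 \<Rightarrow> 'a cyc3) \<Rightarrow> nat" where
  "lee_wt L y = (\<Sum>x\<in>L. gray_wt (y x))"

definition min_lee_dist :: "'a::field cyc3 set \<Rightarrow> ('a cyc3 \<Rightarrow> 'a cyc3) set \<Rightarrow> nat" where
  "min_lee_dist L D = Min {lee_wt L y | y. y \<in> D \<and> (\<exists>x\<in>L. y x \<noteq> czero)}"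

end

theory Submission imports Defs "HOL-Number_Theory.Residues" "HOL-Computational_Algebra.Polynomial" begin

lemma char3:
  assumes "card (UNIV :: 'a::{field,finite} set) = 3 ^ m"
  shows "(3::'a) = 0"
proof -
  have pos: "CHAR('a) > 0" by (rule finite_imp_CHAR_pos) simp
  hence pr: "prime CHAR('a)" by (rule prime_CHAR_semidom)
  have "CHAR('a) dvd 3 ^ m" using CHAR_dvd_CARD[where 'a='a] assms by simp
  hence "CHAR('a) dvd 3" using pr prime_dvd_power by blast
  hence "CHAR('a) = 3" proof -
    assume d: "CHAR('a) dvd 3"
    have "prime (3::nat)" by simp
    hence "CHAR('a) = 1 \<or> CHAR('a) = 3" using d unfolding prime_nat_iff by blast
    thus ?thesis using pr by auto
  qed
  hence "of_nat 3 = (0::'a)" by (metis of_nat_CHAR)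
  thus ?thesis by simp
qed

lemma cmul_comm: "cmul x y = cmul y x"
  by (cases x; cases y) (simp add: cmul_def algebra_simps)

lemma cmul_assoc: "cmul (cmul x y) z = cmul x (cmul y z)"
  by (cases x; cases y; cases z) (simp add: cmul_def algebra_simps)

lemma cmul_cone: "cmul cone x = x"
  by (cases x) (simp add: cmul_def cone_def)

lemma cmul_czero: "cmul x czero = czero"
  by (cases x) (simp add: cmul_def czero_def)

lemma cmul_scal: "cmul (s,0,0) (a,b,c) = (s*a, s*b, s*c)"
  by (simp add: cmul_def)

lemma ubasis_mul:
  fixes a b c a' b' c' :: "'a::field"
  assumes "(3::'a::field) = 0"
  shows "cmul (ubasis a b c) (ubasis a' b' c') = ubasis (a*a') (a*b' + b*a') (a*c' + b*b' + c*a')"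
proof -
  have e1: "(a - b + c) * (a' - b' + c') + (b - 2 * c) * c' + c * (b' - 2 * c') =
     a * a' - (a * b' + b * a') + (a * c' + b * b' + c * a') + 3 * (-(c*c'))" by (simp add: algebra_simps)
  have e2: "(a - b + c) * (b' - 2 * c') + (b - 2 * c) * (a' - b' + c') + c * c' =
     a * b' + b * a' - 2 * (a * c' + b * b' + c * a') + 3 * (b*c' + c*b' - c*c')" by (simp add: algebra_simps)
  have e3: "(a - b + c) * c' + (b - 2 * c) * (b' - 2 * c') + c * (a' - b' + c') =
     a * c' + b * b' + c * a' + 3 * (2*c*c' - b*c' - c*b')" by (simp add: algebra_simps)
  show ?thesis unfolding cmul_def ubasis_def using e1 e2 e3 assms
    by (simp add: algebra_simps)
qed

lemma Lprime_units:
  assumes "(3::'a::field) = 0"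
  shows "Lprime \<subseteq> (Runits :: 'a cyc3 set)"
proof
  fix w :: "'a cyc3" assume "w \<in> Lprime"
  then obtain s x2 x3 where w: "w = ubasis s x2 x3" and s: "s \<in> Qsq" unfolding Lprime_def by auto
  have s0: "s \<noteq> 0" using s unfolding Qsq_def by auto
  have "cmul w (ubasis (1/s) (-x2/s^2) (x2^2/s^3 - x3/s^2)) = cone"
    unfolding w ubasis_mul[OF assms] using s0
    by (simp add: ubasis_def cone_def field_simps power2_eq_square power3_eq_cube)
  thus "w \<in> Runits" unfolding Runits_def by blast
qed

lemma trace_nonzero:
  assumes "card (UNIV :: 'a::{field,finite} set) = 3 ^ m" and "m \<ge> 1"
  shows "\<exists>t::'a. abstr m t \<noteq> 0"
proof (rule ccontr)
  assume "\<not> ?thesis"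
  hence all: "abstr m t = 0" for t :: 'a by blast
  define p :: "'a poly" where "p = (\<Sum>i<m. monom 1 (3^i))"
  have ev: "poly p x = abstr m x" for x
    by (simp add: p_def abstr_def poly_sum poly_monom)
  have c: "coeff p n = (\<Sum>i<m. if 3^i = n then 1 else 0)" for n
    by (simp add: p_def coeff_sum coeff_monom)
  have "coeff p (3^(m-1)) = 1"
  proof -
    have "(\<Sum>i<m. if 3^i = (3::nat)^(m-1) then (1::'a) else 0) = (\<Sum>i\<in>{m-1}. 1)"
      using assms(2) by (intro sum.mono_neutral_cong_right) (auto simp: power_inject_exp)
    thus ?thesis by (simp add: c)
  qed
  hence p0: "p \<noteq> 0" by auto
  have "degree p \<le> 3^(m-1)"
  proof (rule degree_le, intro allI impI)
    fix n :: nat assume "3^(m-1) < n"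
    moreover have "3^i \<le> (3::nat)^(m-1)" if "i < m" for i using that by (intro power_increasing) auto
    ultimately show "coeff p n = 0" unfolding c[of n] by (intro sum.neutral) (auto simp del: power_increasing_iff dest: leD)
  qed
  moreover have "card {x. poly p x = 0} \<le> degree p" by (rule card_poly_roots_bound[OF p0])
  moreover have "{x. poly p x = 0} = UNIV" using ev all by auto
  moreover have "card {x. poly p x = 0} = 3^m" using \<open>{x. poly p x = 0} = UNIV\<close> assms(1) by simp
  ultimately have "(3::nat)^m \<le> 3^(m-1)" by linarith
  moreover have "(3::nat)^(m-1) < 3^m" using assms(2) by (intro power_strict_increasing) auto
  ultimately show False by linarith
qed


lemma lt3: "i < (3::nat) \<Longrightarrow> i = 0 \<or> i = 1 \<or> i = 2" by auto

lemma gray_wt_czero: "gray_wt (czero::'a::field cyc3) = 0"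
proof -
  have "{i::nat. i < 3 \<and> [0,0,0::'a] ! i \<noteq> 0} = {}" by (auto dest: lt3)
  thus ?thesis by (simp add: gray_wt_def czero_def)
qed

lemma gray_wt_1: "a \<noteq> 0 \<Longrightarrow> gray_wt ((a,0,0)::'a::field cyc3) = 1"
proof -
  assume "a \<noteq> 0"
  hence "{i::nat. i < 3 \<and> [a,0,0::'a] ! i \<noteq> 0} = {0}" by (auto dest: lt3)
  thus ?thesis by (simp add: gray_wt_def)
qed

lemma gray_wt_3: "c \<noteq> 0 \<Longrightarrow> gray_wt ((0,0,c)::'a::field cyc3) = 1"
proof -
  assume "c \<noteq> 0"
  hence "{i::nat. i < 3 \<and> [0,0,c::'a] ! i \<noteq> 0} = {2}" by (auto dest: lt3)
  thus ?thesis by (simp add: gray_wt_def)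
qed

lemma gray_wt_pos:
  assumes "v \<noteq> (czero::'a::field cyc3)"
  shows "gray_wt v \<ge> 1"
proof -
  obtain a b c where v: "v = (a,b,c)" by (cases v) auto
  have fin: "finite {i::nat. i < 3 \<and> [a,b,c] ! i \<noteq> 0}" by auto
  have "\<exists>i. i < 3 \<and> [a,b,c] ! i \<noteq> 0"
  proof -
    have "a \<noteq> 0 \<or> b \<noteq> 0 \<or> c \<noteq> 0" using assms v by (auto simp: czero_def)
    moreover have "a \<noteq> 0 \<Longrightarrow> ?thesis" by (rule exI[of _ 0]) simp
    moreover have "b \<noteq> 0 \<Longrightarrow> ?thesis" by (rule exI[of _ 1]) simp
    moreover have "c \<noteq> 0 \<Longrightarrow> ?thesis" by (rule exI[of _ 2]) simp
    ultimately show ?thesis by blast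
  qed
  then obtain i where "i \<in> {i::nat. i < 3 \<and> [a,b,c] ! i \<noteq> 0}" by auto
  hence "card {i::nat. i < 3 \<and> [a,b,c] ! i \<noteq> 0} > 0" using fin card_gt_0_iff by blast
  thus ?thesis unfolding gray_wt_def v by simp
qed

lemma sum_single:
  assumes "finite L" "p \<in> L" "\<forall>x\<in>L. x \<noteq> p \<longrightarrow> g x = 0"
  shows "sum g L = g p"
proof -
  have "sum g L = sum g {p}"
    using assms by (intro sum.mono_neutral_right) auto
  thus ?thesis by simp
qed

lemma sum_two:
  assumes "finite L" "p \<in> L" "q \<in> L" "p \<noteq> q" "\<forall>x\<in>L. x \<noteq> p \<and> x \<noteq> q \<longrightarrow> g x = 0"
  shows "sum g L = g p + g q"
proof -
  have "sum g L = sum g {p,q}"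
    using assms by (intro sum.mono_neutral_right) auto
  thus ?thesis using assms by simp
qed

lemma lower:
  fixes L :: "'a::{field,finite} cyc3 set"
  fixes t :: 'a
  assumes LU: "L \<subseteq> Runits" and t: "abstr m t \<noteq> 0"
    and y: "y \<in> dual_code L (tcode m L)" and x0: "x0 \<in> L" "y x0 \<noteq> czero"
  shows "lee_wt L y \<ge> 2"
proof (cases "\<exists>x1\<in>L. x1 \<noteq> x0 \<and> y x1 \<noteq> czero")
  case True
  then obtain x1 where x1: "x1 \<in> L" "x1 \<noteq> x0" "y x1 \<noteq> czero" by auto
  have "lee_wt L y \<ge> sum (\<lambda>x. gray_wt (y x)) {x0,x1}"
    unfolding lee_wt_def using x0 x1 by (intro sum_mono2) auto
  moreover have "sum (\<lambda>x. gray_wt (y x)) {x0,x1} \<ge> 2"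
    using x1 x0 gray_wt_pos[of "y x0"] gray_wt_pos[of "y x1"] by simp
  ultimately show ?thesis by linarith
next
  case False
  obtain w where w: "cmul x0 w = cone" using LU x0 unfolding Runits_def by auto
  define a where "a = cmul (t,0,0) w"
  have ax: "cmul a x0 = (t,0,0)"
    unfolding a_def using w by (simp add: cmul_assoc cmul_comm[of w] cmul_comm[of _ cone] cmul_cone)
  define c where "c = (\<lambda>x. if x \<in> L then Tr m (cmul a x) else czero)"
  have "c \<in> tcode m L" unfolding c_def tcode_def by blast
  hence cs: "csum (\<lambda>x. cmul (c x) (y x)) L = czero" using y unfolding dual_code_def by blast
  have z: "\<forall>x\<in>L. x \<noteq> x0 \<longrightarrow> cmul (c x) (y x) = czero" using False by (auto simp: cmul_czero)
  have "csum (\<lambda>x. cmul (c x) (y x)) L = cmul (c x0) (y x0)"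
    unfolding csum_def using z x0
    by (simp add: sum_single[OF _ x0(1)] czero_def prod_eq_iff)
  also have "c x0 = (abstr m t, abstr m 0, abstr m 0)" unfolding c_def using x0 ax by (simp add: Tr_def)
  also have "abstr m (0::'a) = 0" by (simp add: abstr_def power_0_left)
  finally have "cmul (abstr m t, 0, 0) (y x0) = czero" using cs by simp
  moreover obtain p q r where "y x0 = (p,q,r)" by (cases "y x0") auto
  ultimately show ?thesis using x0(2) t by (simp add: cmul_scal czero_def)
qed


theorem theorem7p2:
  fixes m :: nat and L :: "'a::{field,finite} cyc3 set"
  assumes "m \<ge> 1" and "card (UNIV :: 'a set) = 3 ^ m"
    and "L \<in> {Lprime, Runits}"
  shows "min_lee_dist L (dual_code L (tcode m L)) = 2"
proof -
  have three: "(3::'a) = 0" by (rule char3[OF assms(2)])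
  have h3: "z + 2*z = 0" "2*z + z = 0" for z :: 'a
  proof -
    have "z + 2*z = 3*z" "2*z + z = 3*z" by (simp_all add: algebra_simps)
    thus "z + 2*z = 0" "2*z + z = 0" using three by simp_all
  qed
  have two: "(2::'a) \<noteq> 0"
  proof
    assume "(2::'a) = 0"
    moreover have "(3::'a) = 2 + 1" by simp
    ultimately have "(3::'a) = 1" by simp
    thus False using three by simp
  qed
  have LU: "L \<subseteq> Runits" using assms(3) Lprime_units[OF three] by auto
  obtain t :: 'a where t: "abstr m t \<noteq> 0" using trace_nonzero[OF assms(2,1)] by blast
  define u :: "'a cyc3" where "u = (0,1,0)"
  have cone_u: "cone \<noteq> u" by (simp add: cone_def u_def)
  have inL: "cone \<in> L \<and> u \<in> L"
  proof (cases "L = Runits")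
    case True
    have "cmul cone cone = (cone :: 'a cyc3)" by (rule cmul_cone)
    moreover have "cmul u (0,0,1) = cone" by (simp add: u_def cmul_def cone_def)
    ultimately show ?thesis unfolding True Runits_def by blast
  next
    case False
    hence L: "L = Lprime" using assms(3) by auto
    have q: "(1::'a) \<in> Qsq" unfolding Qsq_def by (rule CollectI, rule exI[of _ 1]) simp
    have "cone = ubasis 1 0 (0::'a)" by (simp add: cone_def ubasis_def)
    moreover have "u = ubasis 1 1 (0::'a)" by (simp add: u_def ubasis_def)
    ultimately show ?thesis unfolding L Lprime_def using q by blast
  qed
  have finL: "finite L" by simp
  define y0 :: "'a cyc3 \<Rightarrow> 'a cyc3" where
    "y0 = (\<lambda>x. if x = cone then cone else if x = u then (0,0,2) else czero)"
  have y0D: "y0 \<in> dual_code L (tcode m L)"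
    unfolding dual_code_def
  proof (intro CollectI conjI ballI allI impI)
    fix x assume "x \<in> L"
    show "y0 x \<in> Rset" by (simp add: y0_def Rset_def F3_def cone_def czero_def)
  next
    fix x assume "x \<notin> L"
    thus "y0 x = czero" using inL y0_def by auto
  next
    fix c assume "c \<in> tcode m L"
    then obtain a where c: "c = (\<lambda>x. if x \<in> L then Tr m (cmul a x) else czero)"
      unfolding tcode_def by blast
    obtain a1 a2 a3 where a: "a = (a1,a2,a3)" by (cases a) auto
    let ?f = "\<lambda>x. cmul (c x) (y0 x)"
    have van: "\<forall>x\<in>L. x \<noteq> cone \<and> x \<noteq> u \<longrightarrow> ?f x = czero"
      by (auto simp: y0_def cmul_czero)
    have fc: "?f cone = (abstr m a1, abstr m a2, abstr m a3)"
      using inL by (simp add: c y0_def a cmul_comm[of _ cone] cmul_cone Tr_def)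
    have fu: "?f u = (2 * abstr m a1, 2 * abstr m a2, 2 * abstr m a3)"
      using inL cone_u by (simp add: c y0_def a u_def cmul_def Tr_def algebra_simps)
    have "csum ?f L = cadd (?f cone) (?f u)"
      unfolding csum_def cadd_def
      using sum_two[OF finL _ _ cone_u, of "\<lambda>x. fst (?f x)"]
            sum_two[OF finL _ _ cone_u, of "\<lambda>x. fst (snd (?f x))"]
            sum_two[OF finL _ _ cone_u, of "\<lambda>x. snd (snd (?f x))"] inL van
      by (simp add: czero_def split: prod.splits)
    also have "\<dots> = czero" unfolding fc fu by (simp add: cadd_def czero_def h3)
    finally show "csum ?f L = czero" .
  qed
  have wt: "lee_wt L y0 = 2"
  proof -
    have "lee_wt L y0 = gray_wt (y0 cone) + gray_wt (y0 u)"
      unfolding lee_wt_def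
      by (rule sum_two[OF finL _ _ cone_u]) (use inL in \<open>auto simp: y0_def gray_wt_czero\<close>)
    also have "\<dots> = 2" using cone_u two
      by (simp add: y0_def gray_wt_3 cone_def gray_wt_1)
    finally show ?thesis .
  qed
  let ?S = "{lee_wt L y | y. y \<in> dual_code L (tcode m L) \<and> (\<exists>x\<in>L. y x \<noteq> czero)}"
  have fin: "finite ?S"
  proof -
    have "?S \<subseteq> (lee_wt L) ` UNIV" by auto
    moreover have "finite ((lee_wt L) ` (UNIV :: ('a cyc3 \<Rightarrow> 'a cyc3) set))" by simp
    ultimately show ?thesis by (rule finite_subset)
  qed
  have mem: "2 \<in> ?S"
  proof -
    have "y0 cone \<noteq> czero" by (simp add: y0_def cone_def czero_def)
    hence "(2::nat) = lee_wt L y0 \<and> y0 \<in> dual_code L (tcode m L) \<and> (\<exists>x\<in>L. y0 x \<noteq> czero)"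
      using y0D wt inL by auto
    thus ?thesis by blast
  qed
  have lb: "\<And>k. k \<in> ?S \<Longrightarrow> 2 \<le> k"
    using lower[OF LU t] by blast
  show ?thesis unfolding min_lee_dist_def
    by (rule Min_eqI[OF fin lb mem])
qed

end
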